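(* Let $(B,k)$ be an instance of the orthogonal buttons and scissors problem. If $B$ contains more than $k^2$ light buttons, then $(B,k)$ is a no-instance.
   Context: An instance of the orthogonal buttons and scissors problem is a pair $(B,k)$ where $B$ is an $n\times m$ matrix with nonnegative integer entries and $k$ is a nonnegative integer. Cell $(i,j)$ contains a button of color $c$ if $B[i,j]=c>0$, and no button if $B[i,j]=0$. A cut is either a horizontal cut (a sequence of consecutive cells in one row) or a vertical cut (a sequence of consecutive cells in one column). Cuts are applied one after another; a cut is valid at the moment it is applied if, among the buttons still present, its first and last cells contain buttons and all buttons in its cells have the same color. Applying a cut deletes all buttons in its cells. $(B,k)$ is a yes-instance if some sequence of at most $k$ cuts, each valid when applied, removes all buttons of $B$, and a no-instance otherwise. A row or column of $B$ is heavy if it contains at least $k+1$ buttons and light otherwise. A button is heavy if it lies in some heavy row or heavy column, and light otherwise. *)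

theory Defs
  imports Main
begin

text \<open>A matrix B with n rows and m columns is modelled as a function
  B :: nat \<Rightarrow> nat \<Rightarrow> nat, where only the entries B i j with i < n and j < m matter.
  Cell (i,j) holds a button of colour B i j iff B i j > 0.\<close>

definition buttons :: "nat \<Rightarrow> nat \<Rightarrow> (nat \<Rightarrow> nat \<Rightarrow> nat) \<Rightarrow> (nat \<times> nat) set" where
  "buttons n m B = {(i, j). i < n \<and> j < m \<and> B i j > 0}"

datatype cut = HCut nat nat nat | VCut nat nat nat

fun cut_ok :: "nat \<Rightarrow> nat \<Rightarrow> cut \<Rightarrow> bool" where
  "cut_ok n m (HCut i a b) = (i < n \<and> a \<le> b \<and> b < m)"
| "cut_ok n m (VCut j a b) = (j < m \<and> a \<le> b \<and> b < n)"

fun cut_cells :: "cut \<Rightarrow> (nat \<times> nat) set" where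
  "cut_cells (HCut i a b) = {(i, j) | j. a \<le> j \<and> j \<le> b}"
| "cut_cells (VCut j a b) = {(i, j) | i. a \<le> i \<and> i \<le> b}"

fun cut_first :: "cut \<Rightarrow> nat \<times> nat" where
  "cut_first (HCut i a b) = (i, a)"
| "cut_first (VCut j a b) = (a, j)"

fun cut_last :: "cut \<Rightarrow> nat \<times> nat" where
  "cut_last (HCut i a b) = (i, b)"
| "cut_last (VCut j a b) = (b, j)"

definition valid_cut :: "nat \<Rightarrow> nat \<Rightarrow> (nat \<Rightarrow> nat \<Rightarrow> nat) \<Rightarrow> (nat \<times> nat) set \<Rightarrow> cut \<Rightarrow> bool" where
  "valid_cut n m B S c \<longleftrightarrow> cut_ok n m c \<and> cut_first c \<in> S \<and> cut_last c \<in> S \<and>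
     (\<forall>p \<in> cut_cells c \<inter> S. case_prod B p = case_prod B (cut_first c))"

fun apply_cuts :: "nat \<Rightarrow> nat \<Rightarrow> (nat \<Rightarrow> nat \<Rightarrow> nat) \<Rightarrow> (nat \<times> nat) set \<Rightarrow> cut list \<Rightarrow> (nat \<times> nat) set option" where
  "apply_cuts n m B S [] = Some S"
| "apply_cuts n m B S (c # cs) =
     (if valid_cut n m B S c then apply_cuts n m B (S - cut_cells c) cs else None)"

definition yes_instance :: "nat \<Rightarrow> nat \<Rightarrow> (nat \<Rightarrow> nat \<Rightarrow> nat) \<Rightarrow> nat \<Rightarrow> bool" where
  "yes_instance n m B k \<longleftrightarrow>
     (\<exists>cs. length cs \<le> k \<and> apply_cuts n m B (buttons n m B) cs = Some {})"

definition heavy_row :: "nat \<Rightarrow> nat \<Rightarrow> (nat \<Rightarrow> nat \<Rightarrow> nat) \<Rightarrow> nat \<Rightarrow> nat \<Rightarrow> bool" where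
  "heavy_row n m B k i \<longleftrightarrow> i < n \<and> card {j. j < m \<and> B i j > 0} \<ge> k + 1"

definition heavy_col :: "nat \<Rightarrow> nat \<Rightarrow> (nat \<Rightarrow> nat \<Rightarrow> nat) \<Rightarrow> nat \<Rightarrow> nat \<Rightarrow> bool" where
  "heavy_col n m B k j \<longleftrightarrow> j < m \<and> card {i. i < n \<and> B i j > 0} \<ge> k + 1"

definition light_buttons :: "nat \<Rightarrow> nat \<Rightarrow> (nat \<Rightarrow> nat \<Rightarrow> nat) \<Rightarrow> nat \<Rightarrow> (nat \<times> nat) set" where
  "light_buttons n m B k =
     {(i, j) \<in> buttons n m B. \<not> heavy_row n m B k i \<and> \<not> heavy_col n m B k j}"

end

theory Submission
  imports Defs
begin

lemma apply_cuts_cover: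
  "apply_cuts n m B S cs = Some R \<Longrightarrow> S \<subseteq> R \<union> (\<Union>c\<in>set cs. cut_cells c)"
proof (induction cs arbitrary: S)
  case Nil then show ?case by simp
next
  case (Cons c cs)
  then have "apply_cuts n m B (S - cut_cells c) cs = Some R"
    by (simp split: if_splits)
  from Cons.IH[OF this] show ?case by auto
qed

lemma light_cut_card:
  "card (light_buttons n m B k \<inter> cut_cells c) \<le> k"
proof (cases c)
  case (HCut i a b)
  show ?thesis
  proof (cases "i < n \<and> \<not> heavy_row n m B k i")
    case True
    have "light_buttons n m B k \<inter> cut_cells c \<subseteq> Pair i ` {j. j < m \<and> B i j > 0}"
      using HCut by (auto simp: light_buttons_def buttons_def)
    hence "card (light_buttons n m B k \<inter> cut_cells c) \<le> card (Pair i ` {j. j < m \<and> B i j > 0})"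
      by (intro card_mono) auto
    also have "\<dots> \<le> card {j. j < m \<and> B i j > 0}" by (rule card_image_le) auto
    also have "\<dots> \<le> k" using True by (auto simp: heavy_row_def)
    finally show ?thesis .
  next
    case False
    hence "light_buttons n m B k \<inter> cut_cells c = {}"
      using HCut by (auto simp: light_buttons_def buttons_def)
    thus ?thesis by simp
  qed
next
  case (VCut j a b)
  show ?thesis
  proof (cases "j < m \<and> \<not> heavy_col n m B k j")
    case True
    have "light_buttons n m B k \<inter> cut_cells c \<subseteq> (\<lambda>i. (i, j)) ` {i. i < n \<and> B i j > 0}"
      using VCut by (auto simp: light_buttons_def buttons_def)
    hence "card (light_buttons n m B k \<inter> cut_cells c) \<le> card ((\<lambda>i. (i, j)) ` {i. i < n \<and> B i j > 0})"
      by (intro card_mono) auto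
    also have "\<dots> \<le> card {i. i < n \<and> B i j > 0}" by (rule card_image_le) auto
    also have "\<dots> \<le> k" using True by (auto simp: heavy_col_def)
    finally show ?thesis .
  next
    case False
    hence "light_buttons n m B k \<inter> cut_cells c = {}"
      using VCut by (auto simp: light_buttons_def buttons_def)
    thus ?thesis by simp
  qed
qed

theorem mainTheorem3:
  fixes n m k :: nat and B :: "nat \<Rightarrow> nat \<Rightarrow> nat"
  assumes "card (light_buttons n m B k) > k ^ 2"
  shows "\<not> yes_instance n m B k"
proof
  assume "yes_instance n m B k"
  then obtain cs where len: "length cs \<le> k"
    and ap: "apply_cuts n m B (buttons n m B) cs = Some {}"
    unfolding yes_instance_def by blast
  have cov: "buttons n m B \<subseteq> (\<Union>c\<in>set cs. cut_cells c)"
    using apply_cuts_cover[OF ap] by simp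
  have "light_buttons n m B k \<subseteq> buttons n m B"
    by (auto simp: light_buttons_def)
  hence sub: "light_buttons n m B k \<subseteq> (\<Union>c\<in>set cs. light_buttons n m B k \<inter> cut_cells c)"
    using cov by blast
  have fin: "finite (\<Union>c\<in>set cs. light_buttons n m B k \<inter> cut_cells c)"
  proof -
    have "buttons n m B \<subseteq> {..<n} \<times> {..<m}" by (auto simp: buttons_def)
    hence "finite (buttons n m B)" by (rule finite_subset) auto
    thus ?thesis using \<open>light_buttons n m B k \<subseteq> buttons n m B\<close>
      by (auto intro: finite_subset)
  qed
  have "card (light_buttons n m B k) \<le> card (\<Union>c\<in>set cs. light_buttons n m B k \<inter> cut_cells c)"
    by (rule card_mono[OF fin sub])
  also have "\<dots> \<le> (\<Sum>c\<in>set cs. card (light_buttons n m B k \<inter> cut_cells c))"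
    by (rule card_UN_le) simp
  also have "\<dots> \<le> (\<Sum>c\<in>set cs. k)"
    by (rule sum_mono) (rule light_cut_card)
  also have "\<dots> = card (set cs) * k" by simp
  also have "\<dots> \<le> length cs * k" by (simp add: card_length)
  also have "\<dots> \<le> k * k" using len by simp
  finally show False using assms by (simp add: power2_eq_square)
qed

end
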